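(* Let $n\geqslant 18$, $k=\lceil\log_2 n\rceil$, $G=(V,E)$ the complete graph on $V=\{1,\ldots,n\}$, and for $i\in V$ let $\mathbf i\in\{0,1\}^k$ be the binary digits of $i-1$ (i.e. $i-1=\sum_{t=1}^k i_t2^{t-1}$). Let $b(\mathbf x)=\sum_{ij\in E}(-1)^{\langle\mathbf i,\mathbf j\rangle}x_ix_j$. Then for $\mathbf x=(1/2,\ldots,1/2)$, \[\operatorname{mcgap}[b](\mathbf x)\geqslant\frac{\sqrt n}{3}\operatorname{chgap}[b](\mathbf x).\]
   Context: $\langle\mathbf i,\mathbf j\rangle=\sum_t i_tj_t$. $B=\{(\mathbf x,z)\in[0,1]^n\times\mathbb R:z=b(\mathbf x)\}$. The McCormick polytopes are $P=\{(\mathbf x,\mathbf y)\in[0,1]^n\times[0,1]^{|E|}: y_{ij}\le x_i,\ y_{ij}\le x_j,\ y_{ij}\ge x_i+x_j-1\ \forall ij\in E\}$ and $Q=\{(\mathbf x,z)\in[0,1]^n\times\mathbb R:\exists\mathbf y\in[0,1]^{|E|}\text{ with }(\mathbf x,\mathbf y)\in P,\ z=\sum_{ij\in E}a_{ij}y_{ij}\}$ where $a_{ij}$ are the coefficients of $b$. $\operatorname{cav}[b](\mathbf x)=\max\{z:(\mathbf x,z)\in\operatorname{conv}(B)\}$, $\operatorname{vex}[b](\mathbf x)=\min\{z:(\mathbf x,z)\in\operatorname{conv}(B)\}$, $\operatorname{mcu}[b](\mathbf x)=\max\{z:(\mathbf x,z)\in Q\}$, $\operatorname{mcl}[b](\mathbf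 x)=\min\{z:(\mathbf x,z)\in Q\}$, $\operatorname{chgap}[b]=\operatorname{cav}[b]-\operatorname{vex}[b]$, $\operatorname{mcgap}[b]=\operatorname{mcu}[b]-\operatorname{mcl}[b]$. *)

theory Defs
  imports "HOL-Analysis.Analysis"
begin

definition cube :: "nat \<Rightarrow> (nat \<Rightarrow> real) set" where
  "cube n = {x. (\<forall>i\<in>{1..n}. 0 \<le> x i \<and> x i \<le> 1) \<and> (\<forall>i. i \<notin> {1..n} \<longrightarrow> x i = 0)}"

definition edges :: "nat \<Rightarrow> (nat \<times> nat) set" where
  "edges n = {(i,j). 1 \<le> i \<and> i < j \<and> j \<le> n}"

definition digit :: "nat \<Rightarrow> nat \<Rightarrow> nat" where
  "digit i t = ((i - 1) div 2 ^ (t - 1)) mod 2"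

definition bitinner :: "nat \<Rightarrow> nat \<Rightarrow> nat \<Rightarrow> nat" where
  "bitinner k i j = (\<Sum>t=1..k. digit i t * digit j t)"

definition kbits :: "nat \<Rightarrow> nat" where
  "kbits n = nat \<lceil>log 2 (real n)\<rceil>"

definition coef :: "nat \<Rightarrow> nat \<times> nat \<Rightarrow> real" where
  "coef n e = (-1) ^ bitinner (kbits n) (fst e) (snd e)"

definition bilin :: "(nat \<times> nat) set \<Rightarrow> (nat \<times> nat \<Rightarrow> real) \<Rightarrow> (nat \<Rightarrow> real) \<Rightarrow> real" where
  "bilin E a x = (\<Sum>e\<in>E. a e * x (fst e) * x (snd e))"

definition graphB :: "nat \<Rightarrow> (nat \<times> nat) set \<Rightarrow> (nat \<times> nat \<Rightarrow> real) \<Rightarrow> ((nat \<Rightarrow> real) \<times> real) set" where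
  "graphB n E a = {(x,z). x \<in> cube n \<and> z = bilin E a x}"

definition convh :: "((nat \<Rightarrow> real) \<times> real) set \<Rightarrow> ((nat \<Rightarrow> real) \<times> real) set" where
  "convh S = {(x,z). \<exists>(m::nat) (p::nat \<Rightarrow> (nat \<Rightarrow> real) \<times> real) (u::nat \<Rightarrow> real).
      (\<forall>l<m. p l \<in> S \<and> 0 \<le> u l) \<and> (\<Sum>l<m. u l) = 1 \<and>
      x = (\<lambda>i. \<Sum>l<m. u l * fst (p l) i) \<and> z = (\<Sum>l<m. u l * snd (p l))}"

definition cav :: "nat \<Rightarrow> (nat \<times> nat) set \<Rightarrow> (nat \<times> nat \<Rightarrow> real) \<Rightarrow> (nat \<Rightarrow> real) \<Rightarrow> real" where
  "cav n E a x = Sup {z. (x,z) \<in> convh (graphB n E a)}"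

definition vex :: "nat \<Rightarrow> (nat \<times> nat) set \<Rightarrow> (nat \<times> nat \<Rightarrow> real) \<Rightarrow> (nat \<Rightarrow> real) \<Rightarrow> real" where
  "vex n E a x = Inf {z. (x,z) \<in> convh (graphB n E a)}"

definition mcP :: "nat \<Rightarrow> (nat \<times> nat) set \<Rightarrow> ((nat \<Rightarrow> real) \<times> (nat \<times> nat \<Rightarrow> real)) set" where
  "mcP n E = {(x,y). x \<in> cube n \<and> (\<forall>e\<in>E. 0 \<le> y e \<and> y e \<le> 1 \<and>
      y e \<le> x (fst e) \<and> y e \<le> x (snd e) \<and> y e \<ge> x (fst e) + x (snd e) - 1)}"

definition mcQ :: "nat \<Rightarrow> (nat \<times> nat) set \<Rightarrow> (nat \<times> nat \<Rightarrow> real) \<Rightarrow> ((nat \<Rightarrow> real) \<times> real) set" where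
  "mcQ n E a = {(x,z). x \<in> cube n \<and> (\<exists>y. (x,y) \<in> mcP n E \<and> z = (\<Sum>e\<in>E. a e * y e))}"

definition mcu :: "nat \<Rightarrow> (nat \<times> nat) set \<Rightarrow> (nat \<times> nat \<Rightarrow> real) \<Rightarrow> (nat \<Rightarrow> real) \<Rightarrow> real" where
  "mcu n E a x = Sup {z. (x,z) \<in> mcQ n E a}"

definition mcl :: "nat \<Rightarrow> (nat \<times> nat) set \<Rightarrow> (nat \<times> nat \<Rightarrow> real) \<Rightarrow> (nat \<Rightarrow> real) \<Rightarrow> real" where
  "mcl n E a x = Inf {z. (x,z) \<in> mcQ n E a}"

definition chgap where "chgap n E a x = cav n E a x - vex n E a x"
definition mcgap where "mcgap n E a x = mcu n E a x - mcl n E a x"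

end

theory Submission
  imports Defs
begin

fun bi :: "nat \<Rightarrow> nat \<Rightarrow> nat \<Rightarrow> nat" where
  "bi 0 m p = 0"
| "bi (Suc k) m p = (m mod 2) * (p mod 2) + bi k (m div 2) (p div 2)"

lemma bi_eq: "(\<Sum>t=1..k. ((m div 2^(t-1)) mod 2) * ((p div 2^(t-1)) mod 2)) = bi k m p"
proof (induction k arbitrary: m p)
  case 0 then show ?case by simp
next
  case (Suc k)
  have "(\<Sum>t=1..Suc k. ((m div 2^(t-1)) mod 2) * ((p div 2^(t-1)) mod 2))
     = (m mod 2)*(p mod 2) + (\<Sum>t=Suc 1..Suc k. ((m div 2^(t-1)) mod 2) * ((p div 2^(t-1)) mod 2))"
    by (simp add: sum.atLeast_Suc_atMost)
  also have "(\<Sum>t=Suc 1..Suc k. ((m div 2^(t-1)) mod 2) * ((p div 2^(t-1)) mod 2))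
      = (\<Sum>t=1..k. ((m div 2^t) mod 2) * ((p div 2^t) mod 2))"
    by (subst sum.shift_bounds_cl_Suc_ivl) simp
  also have "\<dots> = (\<Sum>t=1..k. ((m div 2 div 2^(t-1)) mod 2) * ((p div 2 div 2^(t-1)) mod 2))"
  proof (rule sum.cong)
    fix t assume "t \<in> {1..k}"
    then have "(2::nat)^t = 2 * 2^(t-1)" by (cases t) auto
    then show "((m div 2^t) mod 2) * ((p div 2^t) mod 2) = ((m div 2 div 2^(t-1)) mod 2) * ((p div 2 div 2^(t-1)) mod 2)"
      by (simp add: div_mult2_eq)
  qed simp
  also have "\<dots> = bi k (m div 2) (p div 2)" by (rule Suc.IH)
  finally show ?case by simp
qed

lemma bitinner_bi: "bitinner k i j = bi k (i-1) (j-1)"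
  unfolding bitinner_def digit_def by (rule bi_eq)

lemma sum_double: "(\<Sum>m<2*N. f m) = (\<Sum>m<N. f (2*m) + f (2*m+1))" for f :: "nat \<Rightarrow> real"
  by (induction N) (simp_all add: sum.distrib)

lemma neg1_even: "(-1::real)^(a+a) = 1"
  by (simp add: power_add flip: power_mult_distrib)

lemma orth_ne: "p < 2^k \<Longrightarrow> q < 2^k \<Longrightarrow> p \<noteq> q \<Longrightarrow> (\<Sum>m<2^k. (-1::real)^(bi k m p + bi k m q)) = 0"
proof (induction k arbitrary: p q)
  case 0 then show ?case by simp
next
  case (Suc k)
  let ?S = "\<Sum>m<2^k. (-1::real)^(bi k m (p div 2) + bi k m (q div 2))"
  have e0: "(-1::real)^(bi (Suc k) (2*m) p + bi (Suc k) (2*m) q) = (-1)^(bi k m (p div 2) + bi k m (q div 2))" for m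
    by simp
  have e1: "(-1::real)^(bi (Suc k) (2*m+1) p + bi (Suc k) (2*m+1) q) = (-1)^(p mod 2 + q mod 2) * (-1)^(bi k m (p div 2) + bi k m (q div 2))" for m
  proof -
    have "Suc (m*2) mod 2 = 1" "Suc (m*2) div 2 = m" by presburger+
    then show ?thesis by (simp add: power_add algebra_simps)
  qed
  have "(\<Sum>m<2^Suc k. (-1::real)^(bi (Suc k) m p + bi (Suc k) m q)) = (1 + (-1)^(p mod 2 + q mod 2)) * ?S"
    by (simp only: power_Suc sum_double e0 e1) (simp add: sum_distrib_left algebra_simps sum.distrib)
  also have "\<dots> = 0"
  proof (cases "p mod 2 = q mod 2")
    case True
    then have "p div 2 \<noteq> q div 2" using Suc.prems(3) by (metis div_mult_mod_eq)
    moreover have "p div 2 < 2^k" "q div 2 < 2^k" using Suc.prems by auto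
    ultimately have "?S = 0" using Suc.IH by blast
    then show ?thesis by simp
  next
    case False
    then have "p mod 2 + q mod 2 = 1" by presburger
    then show ?thesis by simp
  qed
  finally show ?case .
qed

definition hh :: "nat \<Rightarrow> nat \<Rightarrow> nat \<Rightarrow> real" where
  "hh K i j = (-1::real) ^ bitinner K i j"

lemma hh_sym: "hh K i j = hh K j i"
  unfolding hh_def bitinner_def by (simp add: mult.commute)

lemma hh_sq: "(hh K i j)^2 = 1"
  unfolding hh_def power2_eq_square power_add[symmetric] by (rule neg1_even)

lemma sum_shift1: "(\<Sum>i\<in>{1..N}. g i) = (\<Sum>m<N. g (Suc m))" for g :: "nat \<Rightarrow> real"
proof -
  have "{1..N} = Suc ` {..<N}" by (simp add: image_Suc_lessThan)
  then show ?thesis by (simp add: sum.reindex)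
qed

lemma orth: assumes "j \<in> {1..2^K}" "l \<in> {1..2^K}"
  shows "(\<Sum>i\<in>{1..2^K}. hh K i j * hh K i l) = (if j = l then 2^K else 0)"
proof -
  have "(\<Sum>i\<in>{1..2^K}. hh K i j * hh K i l) = (\<Sum>m<2^K. (-1::real)^(bi K m (j-1) + bi K m (l-1)))"
    by (subst sum_shift1) (simp add: hh_def bitinner_bi power_add)
  also have "\<dots> = (if j = l then 2^K else 0)"
  proof (cases "j = l")
    case True then show ?thesis by (simp add: neg1_even)
  next
    case False
    have "j - 1 \<noteq> l - 1" using False assms by auto
    moreover have "j - 1 < 2^K" "l - 1 < 2^K" using assms by auto
    ultimately show ?thesis using orth_ne False by simp
  qed
  finally show ?thesis .
qed

lemma amgm: fixes t v w :: real assumes "t > 0"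
  shows "\<bar>v * w\<bar> \<le> (t * v^2 + w^2 / t) / 2"
proof -
  have "0 \<le> (t * \<bar>v\<bar> - \<bar>w\<bar>)^2" by simp
  then have "2 * t * \<bar>v * w\<bar> \<le> t^2 * v^2 + w^2"
    by (simp add: power2_eq_square algebra_simps abs_mult)
  then show ?thesis using assms by (simp add: field_simps power2_eq_square)
qed

lemma hadamard: fixes v :: "nat \<Rightarrow> real"
  shows "\<bar>\<Sum>i\<in>{1..2^K}. \<Sum>j\<in>{1..2^K}. hh K i j * v i * v j\<bar>
     \<le> sqrt (2^K) * (\<Sum>i\<in>{1..2^K}. (v i)^2)"
proof -
  define I :: "nat set" where "I = {1..2^K}"
  define N :: real where "N = 2^K"
  define w where "w i = (\<Sum>j\<in>I. hh K i j * v j)" for i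
  define S where "S = (\<Sum>i\<in>I. (v i)^2)"
  have t: "sqrt N > 0" unfolding N_def by simp
  have q: "(\<Sum>i\<in>I. \<Sum>j\<in>I. hh K i j * v i * v j) = (\<Sum>i\<in>I. v i * w i)"
    unfolding w_def by (simp add: sum_distrib_left algebra_simps)
  have "(\<Sum>i\<in>I. (w i)^2) = (\<Sum>i\<in>I. \<Sum>j\<in>I. \<Sum>l\<in>I. hh K i j * v j * (hh K i l * v l))"
    unfolding w_def power2_eq_square sum_product by (rule refl)
  also have "\<dots> = (\<Sum>j\<in>I. \<Sum>i\<in>I. \<Sum>l\<in>I. hh K i j * v j * (hh K i l * v l))"
    by (rule sum.swap)
  also have "\<dots> = (\<Sum>j\<in>I. \<Sum>l\<in>I. \<Sum>i\<in>I. hh K i j * v j * (hh K i l * v l))"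
    by (rule sum.cong[OF refl], rule sum.swap)
  also have "\<dots> = (\<Sum>j\<in>I. \<Sum>l\<in>I. v j * v l * (\<Sum>i\<in>I. hh K i j * hh K i l))"
    by (intro sum.cong refl) (simp add: sum_distrib_left mult.commute mult.left_commute)
  also have "\<dots> = (\<Sum>j\<in>I. \<Sum>l\<in>I. v j * v l * (if j = l then N else 0))"
  proof (intro sum.cong refl)
    fix j l assume "j \<in> I" "l \<in> I"
    then show "v j * v l * (\<Sum>i\<in>I. hh K i j * hh K i l) = v j * v l * (if j = l then N else 0)"
      using orth[of j K l] unfolding I_def N_def by simp
  qed
  also have "\<dots> = (\<Sum>j\<in>I. \<Sum>l\<in>I. if j = l then v j * v l * N else 0)"
    by (intro sum.cong refl) simp
  also have "\<dots> = (\<Sum>j\<in>I. v j * v j * N)"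
    by (intro sum.cong refl) (simp add: sum.delta I_def)
  also have "\<dots> = N * S"
    unfolding S_def by (simp add: sum_distrib_left power2_eq_square mult.commute)
  finally have w2: "(\<Sum>i\<in>I. (w i)^2) = N * S" .
  have "\<bar>\<Sum>i\<in>I. v i * w i\<bar> \<le> (\<Sum>i\<in>I. \<bar>v i * w i\<bar>)" by (rule sum_abs)
  also have "\<dots> \<le> (\<Sum>i\<in>I. (sqrt N * (v i)^2 + (w i)^2 / sqrt N) / 2)"
    by (intro sum_mono amgm t)
  also have "\<dots> = (sqrt N * S + (\<Sum>i\<in>I. (w i)^2) / sqrt N) / 2"
    unfolding S_def by (simp add: sum.distrib sum_distrib_left flip: sum_divide_distrib)
  also have "\<dots> = (sqrt N * S + N * S / sqrt N) / 2" by (simp only: w2)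
  also have "\<dots> = sqrt N * S"
  proof -
    have "N / sqrt N = sqrt N" using real_div_sqrt[of N] unfolding N_def by simp
    then have "N * S / sqrt N = sqrt N * S" by (metis times_divide_eq_left mult.commute)
    then show ?thesis by simp
  qed
  finally show ?thesis using q unfolding I_def N_def S_def by simp
qed


lemma edges_sub: "edges n \<subseteq> {1..n} \<times> {1..n}" unfolding edges_def by auto

lemma finite_edges: "finite (edges n)"
  using edges_sub finite_subset by (metis finite_SigmaI finite_atLeastAtMost)

lemma split_sq: fixes g :: "nat \<times> nat \<Rightarrow> real"
  shows "(\<Sum>i\<in>{1..n}. \<Sum>j\<in>{1..n}. g (i,j)) = (\<Sum>e\<in>edges n. g e + g (snd e, fst e)) + (\<Sum>i\<in>{1..n}. g (i,i))"
proof -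
  let ?E = "edges n" let ?F = "prod.swap ` edges n" let ?D = "(\<lambda>i. (i,i)) ` {1..n}"
  have fin: "finite ?E" by (rule finite_edges)
  have U: "{1..n} \<times> {1..n} = (?E \<union> ?F) \<union> ?D"
  proof (rule set_eqI, clarify)
    fix i j
    show "((i,j) \<in> {1..n} \<times> {1..n}) = ((i,j) \<in> (?E \<union> ?F) \<union> ?D)"
      unfolding edges_def by (cases i j rule: linorder_cases) (auto simp: image_iff)
  qed
  have d1: "?E \<inter> ?F = {}" unfolding edges_def by auto
  have d2: "(?E \<union> ?F) \<inter> ?D = {}" unfolding edges_def by auto
  have "(\<Sum>i\<in>{1..n}. \<Sum>j\<in>{1..n}. g (i,j)) = sum g ({1..n} \<times> {1..n})"
    by (simp add: sum.cartesian_product)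
  also have "\<dots> = sum g ?E + sum g ?F + sum g ?D"
  proof -
    have f2: "finite ?F" "finite ?D" using fin by auto
    have "sum g ((?E \<union> ?F) \<union> ?D) = sum g (?E \<union> ?F) + sum g ?D"
      by (rule sum.union_disjoint) (use fin f2 d2 in auto)
    moreover have "sum g (?E \<union> ?F) = sum g ?E + sum g ?F"
      by (rule sum.union_disjoint) (use fin f2 d1 in auto)
    ultimately show ?thesis unfolding U by simp
  qed
  also have "sum g ?F = (\<Sum>e\<in>?E. g (snd e, fst e))"
    by (subst sum.reindex) (auto simp: inj_on_def prod.swap_def)
  also have "sum g ?D = (\<Sum>i\<in>{1..n}. g (i,i))"
    by (simp add: sum.reindex inj_on_def)
  finally show ?thesis by (simp add: sum.distrib)
qed

lemma rbound:
  assumes x: "x \<in> cube n" and nN: "n \<le> 2^K"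
  shows "\<bar>\<Sum>e\<in>edges n. hh K (fst e) (snd e) * (x (fst e) - 1/2) * (x (snd e) - 1/2)\<bar>
         \<le> (sqrt (2^K) + 1) * n / 8"
proof -
  define v where "v i = (if i \<in> {1..n} then x i - 1/2 else 0)" for i
  define g where "g = (\<lambda>p. hh K (fst p) (snd p) * v (fst p) * v (snd p))"
  define r where "r = (\<Sum>e\<in>edges n. hh K (fst e) (snd e) * (x (fst e) - 1/2) * (x (snd e) - 1/2))"
  define S where "S = (\<Sum>i\<in>{1..n}. (v i)^2)"
  have r': "r = (\<Sum>e\<in>edges n. g e)" unfolding r_def g_def v_def edges_def by (intro sum.cong) auto
  have gs: "g (snd e, fst e) = g e" for e unfolding g_def using hh_sym by simp
  have Q: "(\<Sum>i\<in>{1..n}. \<Sum>j\<in>{1..n}. g (i,j)) = 2*r + (\<Sum>i\<in>{1..n}. hh K i i * (v i)^2)"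
  proof -
    have a: "(\<Sum>e\<in>edges n. g e + g (snd e, fst e)) = 2*r" by (simp add: r' gs sum_distrib_left)
    have b: "(\<Sum>i\<in>{1..n}. g (i,i)) = (\<Sum>i\<in>{1..n}. hh K i i * (v i)^2)"
      by (simp add: g_def power2_eq_square mult.assoc)
    show ?thesis using split_sq[of g n] unfolding a b .
  qed
  have sub: "{1..n} \<subseteq> {1..(2::nat)^K}" using nN by auto
  have QN: "(\<Sum>i\<in>{1..2^K}. \<Sum>j\<in>{1..2^K}. hh K i j * v i * v j) = (\<Sum>i\<in>{1..n}. \<Sum>j\<in>{1..n}. g (i,j))"
  proof -
    have "(\<Sum>i\<in>{1..2^K}. \<Sum>j\<in>{1..2^K}. hh K i j * v i * v j) = (\<Sum>i\<in>{1..n}. \<Sum>j\<in>{1..2^K}. hh K i j * v i * v j)"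
      by (rule sum.mono_neutral_right) (use nN in \<open>auto simp: v_def\<close>)
    also have "\<dots> = (\<Sum>i\<in>{1..n}. \<Sum>j\<in>{1..n}. hh K i j * v i * v j)"
      by (intro sum.cong refl sum.mono_neutral_right) (use nN in \<open>auto simp: v_def\<close>)
    finally show ?thesis by (simp add: g_def)
  qed
  have SN: "(\<Sum>i\<in>{1..2^K}. (v i)^2) = S"
    unfolding S_def by (rule sum.mono_neutral_right) (use nN in \<open>auto simp: v_def\<close>)
  have vb: "(v i)^2 \<le> 1/4" for i
  proof (cases "i \<in> {1..n}")
    case True
    then have "0 \<le> x i" "x i \<le> 1" using x unfolding cube_def by auto
    then have "0 \<le> x i * (1 - x i)" by simp
    moreover have "(x i - 1/2)^2 = 1/4 - x i * (1 - x i)" by (simp add: power2_eq_square algebra_simps)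
    moreover have "v i = x i - 1/2" using True by (simp add: v_def)
    ultimately show ?thesis by simp
  next
    case False then have "v i = 0" unfolding v_def by presburger
    then show ?thesis by simp
  qed
  have S4: "S \<le> n/4"
    unfolding S_def using sum_bounded_above[of "{1..n}" "\<lambda>i. (v i)^2" "1/4"] vb by simp
  have S0: "0 \<le> S" unfolding S_def by (simp add: sum_nonneg)
  have D: "\<bar>\<Sum>i\<in>{1..n}. hh K i i * (v i)^2\<bar> \<le> S"
  proof -
    have "\<bar>\<Sum>i\<in>{1..n}. hh K i i * (v i)^2\<bar> \<le> (\<Sum>i\<in>{1..n}. \<bar>hh K i i * (v i)^2\<bar>)" by (rule sum_abs)
    also have "\<dots> = S" unfolding S_def by (simp add: abs_mult hh_def power_abs)
    finally show ?thesis .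
  qed
  have H: "\<bar>2*r + (\<Sum>i\<in>{1..n}. hh K i i * (v i)^2)\<bar> \<le> sqrt (2^K) * S"
    using hadamard[of K v] QN Q SN by simp
  have M: "sqrt (2^K) * S \<le> sqrt (2^K) * (n/4)" using S4 by (intro mult_left_mono) auto
  have T: "\<bar>2*r\<bar> \<le> \<bar>2*r + (\<Sum>i\<in>{1..n}. hh K i i * (v i)^2)\<bar> + \<bar>\<Sum>i\<in>{1..n}. hh K i i * (v i)^2\<bar>"
    by arith
  have "\<bar>2*r\<bar> \<le> sqrt (2^K) * (n/4) + n/4" using T H D M S4 by linarith
  then have "\<bar>r\<bar> \<le> (sqrt (2^K) + 1) * n / 8" by (simp add: algebra_simps)
  then show ?thesis unfolding r_def by simp
qed


lemma Nbounds:
  assumes "n \<ge> (18::nat)"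
  shows "n \<le> 2 ^ kbits n" "real (2 ^ kbits n) \<le> 2 * real n"
proof -
  have lg: "log 2 (real n) > 0" using assms by simp
  have c: "real (kbits n) = real_of_int \<lceil>log 2 (real n)\<rceil>"
    unfolding kbits_def using lg by (simp add: ceiling_le_zero not_le) 
  have p: "real (2 ^ kbits n) = 2 powr real (kbits n)" by (simp add: powr_realpow)
  have n0: "real n > 0" using assms by simp
  have "real n = 2 powr log 2 (real n)" using n0 by simp
  also have "\<dots> \<le> 2 powr real (kbits n)" unfolding c by (intro powr_mono) auto
  finally have "real n \<le> real (2 ^ kbits n)" using p by simp
  then show "n \<le> 2 ^ kbits n" by linarith
  have "2 powr real (kbits n) \<le> 2 powr (log 2 (real n) + 1)"
    unfolding c by (intro powr_mono) linarith+
  also have "\<dots> = 2 * real n" using n0 by (simp add: powr_add)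
  finally show "real (2 ^ kbits n) \<le> 2 * real n" using p by simp
qed

lemma convbound:
  fixes K n :: nat and z :: real
  assumes nN: "n \<le> 2^K"
    and zin: "((\<lambda>i. if i \<in> {1..n} then 1/2 else 0), z) \<in> convh (graphB n (edges n) (\<lambda>e. hh K (fst e) (snd e)))"
  shows "\<bar>z - (\<Sum>e\<in>edges n. hh K (fst e) (snd e))/4\<bar> \<le> (sqrt (2^K) + 1) * n / 8"
proof -
  define a where "a = (\<lambda>e. hh K (fst e) (snd e))"
  define hx where "hx = (\<lambda>i. if i \<in> {1..n} then 1/2 else (0::real))"
  let ?E = "edges n"
  define R where "R = (sqrt (2^K) + 1) * n / 8"
  define A where "A = (\<Sum>e\<in>?E. a e)"
  define lin where "lin x = (\<Sum>e\<in>?E. a e * (x (fst e) + x (snd e) - 1) / 2)" for x :: "nat \<Rightarrow> real"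
  define rr where "rr x = (\<Sum>e\<in>?E. a e * (x (fst e) - 1/2) * (x (snd e) - 1/2))" for x :: "nat \<Rightarrow> real"
  have bil: "bilin ?E a x = A/4 + lin x + rr x" for x
  proof -
    have "A/4 + lin x + rr x = (\<Sum>e\<in>?E. a e / 4 + a e * (x (fst e) + x (snd e) - 1) / 2 + a e * (x (fst e) - 1/2) * (x (snd e) - 1/2))"
      unfolding A_def lin_def rr_def by (simp add: sum.distrib sum_divide_distrib)
    also have "\<dots> = bilin ?E a x"
      unfolding bilin_def by (intro sum.cong refl) (simp add: field_simps)
    finally show ?thesis by simp
  qed
  have "\<exists>(m::nat) p u. (\<forall>l<m. p l \<in> graphB n ?E a \<and> 0 \<le> u l) \<and> (\<Sum>l<m. u l) = 1 \<and>
      hx = (\<lambda>i. \<Sum>l<m. u l * fst (p l) i) \<and> z = (\<Sum>l<m. u l * snd (p l))"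
    using zin unfolding convh_def a_def[symmetric] hx_def[symmetric] by simp
  then obtain m :: nat and p u where
    pu: "\<forall>l<m. p l \<in> graphB n ?E a \<and> 0 \<le> u l" and u1: "(\<Sum>l<m. u l) = 1"
    and hxe: "hx = (\<lambda>i. \<Sum>l<m. u l * fst (p l) i)" and ze: "z = (\<Sum>l<m. u l * snd (p l))"
    by blast
  define X where "X l = fst (p l)" for l
  have Xc: "X l \<in> cube n" and Xb: "snd (p l) = bilin ?E a (X l)" if "l < m" for l
  proof -
    have "p l \<in> graphB n ?E a" using pu that by auto
    then show "X l \<in> cube n" "snd (p l) = bilin ?E a (X l)" unfolding X_def
      by (cases "p l"; auto simp: graphB_def)+
  qed
  have hxs: "hx i = (\<Sum>l<m. u l * X l i)" for i using hxe unfolding X_def by metis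
  have z2: "z = A/4 * (\<Sum>l<m. u l) + (\<Sum>l<m. u l * lin (X l)) + (\<Sum>l<m. u l * rr (X l))"
  proof -
    have "z = (\<Sum>l<m. u l * (A/4 + lin (X l) + rr (X l)))"
      unfolding ze by (intro sum.cong refl) (simp add: Xb bil)
    then show ?thesis by (simp add: algebra_simps sum.distrib sum_distrib_left)
  qed
  have L0: "(\<Sum>l<m. u l * lin (X l)) = 0"
  proof -
    have "(\<Sum>l<m. u l * lin (X l)) = (\<Sum>l<m. \<Sum>e\<in>?E. u l * (a e * (X l (fst e) + X l (snd e) - 1) / 2))"
      unfolding lin_def by (simp add: sum_distrib_left)
    also have "\<dots> = (\<Sum>e\<in>?E. \<Sum>l<m. u l * (a e * (X l (fst e) + X l (snd e) - 1) / 2))"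
      by (rule sum.swap)
    also have "\<dots> = (\<Sum>e\<in>?E. a e / 2 * ((\<Sum>l<m. u l * X l (fst e)) + (\<Sum>l<m. u l * X l (snd e)) - (\<Sum>l<m. u l)))"
    proof (intro sum.cong refl)
      fix e
      have "(\<Sum>l<m. u l * (a e * (X l (fst e) + X l (snd e) - 1) / 2))
          = (\<Sum>l<m. a e / 2 * (u l * X l (fst e)) + a e / 2 * (u l * X l (snd e)) - a e / 2 * u l)"
        by (intro sum.cong refl) (simp add: field_simps)
      also have "\<dots> = a e / 2 * (\<Sum>l<m. u l * X l (fst e)) + a e / 2 * (\<Sum>l<m. u l * X l (snd e)) - a e / 2 * (\<Sum>l<m. u l)"
        by (simp only: sum.distrib sum_subtractf sum_distrib_left)
      also have "\<dots> = a e / 2 * ((\<Sum>l<m. u l * X l (fst e)) + (\<Sum>l<m. u l * X l (snd e)) - (\<Sum>l<m. u l))"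
        by (simp add: algebra_simps)
      finally show "(\<Sum>l<m. u l * (a e * (X l (fst e) + X l (snd e) - 1) / 2))
          = a e / 2 * ((\<Sum>l<m. u l * X l (fst e)) + (\<Sum>l<m. u l * X l (snd e)) - (\<Sum>l<m. u l))" .
    qed
    also have "\<dots> = (\<Sum>e\<in>?E. a e / 2 * (hx (fst e) + hx (snd e) - 1))"
      by (simp add: hxs u1)
    also have "\<dots> = 0"
      by (intro sum.neutral ballI) (auto simp: hx_def edges_def)
    finally show ?thesis .
  qed
  have Rb: "\<bar>\<Sum>l<m. u l * rr (X l)\<bar> \<le> R"
  proof -
    have "\<bar>\<Sum>l<m. u l * rr (X l)\<bar> \<le> (\<Sum>l<m. \<bar>u l * rr (X l)\<bar>)" by (rule sum_abs)
    also have "\<dots> \<le> (\<Sum>l<m. u l * R)"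
    proof (rule sum_mono)
      fix l assume l: "l \<in> {..<m}"
      have "\<bar>rr (X l)\<bar> \<le> R" unfolding rr_def R_def a_def using rbound[OF Xc nN] l by simp
      then show "\<bar>u l * rr (X l)\<bar> \<le> u l * R" using pu l by (simp add: abs_mult mult_left_mono)
    qed
    also have "\<dots> = R" using u1 by (simp add: sum_distrib_right[symmetric])
    finally show ?thesis .
  qed
  have "\<bar>z - A/4\<bar> \<le> R" using z2 L0 Rb u1 by simp
  then show ?thesis unfolding A_def a_def R_def .
qed



lemma coef_hh: "coef n = (\<lambda>e. hh (kbits n) (fst e) (snd e))"
  unfolding coef_def hh_def by (rule ext) simp

lemma card_edges: "2 * real (card (edges n)) + real n = real n * real n"
proof -
  have "(\<Sum>i\<in>{1..n}. \<Sum>j\<in>{1..n}. (\<lambda>_. 1::real) (i,j)) = (\<Sum>e\<in>edges n. (1::real) + 1) + (\<Sum>i\<in>{1..n}. (1::real))"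
    by (rule split_sq)
  then show ?thesis by simp
qed

theorem mainTheorem7:
  fixes n :: nat
  assumes "n \<ge> 18"
  shows "mcgap n (edges n) (coef n) (\<lambda>i. if i \<in> {1..n} then 1/2 else 0)
     \<ge> sqrt (real n) / 3 * chgap n (edges n) (coef n) (\<lambda>i. if i \<in> {1..n} then 1/2 else 0)"
proof -
  define K where "K = kbits n"
  define hx where "hx = (\<lambda>i. if i \<in> {1..n} then 1/2 else (0::real))"
  define a where "a = coef n"
  let ?E = "edges n"
  define A where "A = (\<Sum>e\<in>?E. a e)"
  define R where "R = (sqrt (2^K) + 1) * n / 8"
  have aK: "a = (\<lambda>e. hh K (fst e) (snd e))" unfolding a_def K_def by (rule coef_hh)
  have nN: "n \<le> 2^K" and Nn: "real (2^K) \<le> 2 * real n" using Nbounds[OF assms] unfolding K_def by auto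
  have a2: "(a e)^2 = 1" for e unfolding aK by (simp add: hh_sq)
  have a1: "a e = 1 \<or> a e = -1" for e using a2[of e] by (simp add: power2_eq_1_iff)
  have hxc: "hx \<in> cube n" unfolding cube_def hx_def by auto
  define C where "C = {z. (hx, z) \<in> convh (graphB n ?E a)}"
  have Cb: "\<bar>z - A/4\<bar> \<le> R" if "z \<in> C" for z
    using convbound[OF nN, of z] that unfolding C_def hx_def aK A_def R_def by simp
  have Cne: "bilin ?E a hx \<in> C"
  proof -
    have "(hx, bilin ?E a hx) \<in> graphB n ?E a" unfolding graphB_def using hxc by simp
    then show ?thesis unfolding C_def convh_def
      by (auto intro!: exI[of _ 1] exI[of _ "\<lambda>_. (hx, bilin ?E a hx)"] exI[of _ "\<lambda>_. 1"])
  qed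
  have cav: "cav n ?E a hx \<le> A/4 + R"
    unfolding cav_def C_def[symmetric]
  proof (rule cSup_least)
    show "C \<noteq> {}" using Cne by auto
    fix x assume "x \<in> C" then have "\<bar>x - A/4\<bar> \<le> R" by (rule Cb)
    then show "x \<le> A/4 + R" by linarith
  qed
  have vex: "vex n ?E a hx \<ge> A/4 - R"
    unfolding vex_def C_def[symmetric]
  proof (rule cInf_greatest)
    show "C \<noteq> {}" using Cne by auto
    fix x assume "x \<in> C" then have "\<bar>x - A/4\<bar> \<le> R" by (rule Cb)
    then show "A/4 - R \<le> x" by linarith
  qed
  have ch: "chgap n ?E a hx \<le> 2 * R" using cav vex unfolding chgap_def by simp
  define M where "M = {z. (hx, z) \<in> mcQ n ?E a}"
  have Mb: "\<bar>z\<bar> \<le> real (card ?E)" if "z \<in> M" for z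
  proof -
    from that obtain y where y: "(hx, y) \<in> mcP n ?E" "z = (\<Sum>e\<in>?E. a e * y e)"
      unfolding M_def mcQ_def by auto
    have "\<bar>z\<bar> \<le> (\<Sum>e\<in>?E. \<bar>a e * y e\<bar>)" unfolding y(2) by (rule sum_abs)
    also have "\<dots> \<le> (\<Sum>e\<in>?E. 1)"
    proof (rule sum_mono)
      fix e assume e: "e \<in> ?E"
      then have "0 \<le> y e" "y e \<le> 1" using y(1) unfolding mcP_def by auto
      then show "\<bar>a e * y e\<bar> \<le> 1" using a1[of e] by auto
    qed
    finally show ?thesis by simp
  qed
  have Min: "(\<Sum>e\<in>?E. a e * ((1 + s * a e) / 4)) \<in> M" if s: "s = 1 \<or> s = -1" for s
  proof -
    have ys: "0 \<le> (1 + s * a e) / 4 \<and> (1 + s * a e) / 4 \<le> 1/2 \<and> (1 + s * a e) / 4 \<le> 1" for e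
      using s a1[of e] by auto
    have "(hx, \<lambda>e. (1 + s * a e) / 4) \<in> mcP n ?E"
      unfolding mcP_def using hxc ys by (auto simp: hx_def edges_def)
    then show ?thesis unfolding M_def mcQ_def using hxc by auto
  qed
  have bddA: "bdd_above M"
  proof (rule bdd_aboveI)
    fix x assume "x \<in> M" from Mb[OF this] show "x \<le> real (card ?E)" by linarith
  qed
  have bddB: "bdd_below M"
  proof (rule bdd_belowI)
    fix x assume "x \<in> M" from Mb[OF this] show "- real (card ?E) \<le> x" by linarith
  qed
  have mu: "mcu n ?E a hx \<ge> (\<Sum>e\<in>?E. a e * ((1 + 1 * a e) / 4))"
    unfolding mcu_def M_def[symmetric] using Min[of 1] bddA by (intro cSup_upper) auto
  have ml: "mcl n ?E a hx \<le> (\<Sum>e\<in>?E. a e * ((1 + (-1) * a e) / 4))"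
    unfolding mcl_def M_def[symmetric] using Min[of "-1"] bddB by (intro cInf_lower) auto
  have "(\<Sum>e\<in>?E. a e * ((1 + 1 * a e) / 4)) - (\<Sum>e\<in>?E. a e * ((1 + (-1) * a e) / 4))
        = (\<Sum>e\<in>?E. (a e)^2 / 2)"
    by (simp add: sum_subtractf[symmetric] field_simps power2_eq_square)
  also have "\<dots> = real (card ?E) / 2" by (simp add: a2)
  finally have mg: "mcgap n ?E a hx \<ge> real (card ?E) / 2"
    using mu ml unfolding mcgap_def by linarith
  define s where "s = sqrt (real n)"
  define t where "t = sqrt (real (2^K))"
  have ss: "s * s = real n" unfolding s_def by simp
  have s4: "4 \<le> s" unfolding s_def using assms real_sqrt_le_mono[of 16 "real n"] by simp
  have s0: "0 \<le> s" using s4 by simp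
  have t2: "t \<le> sqrt 2 * s" unfolding t_def s_def using Nn
    by (simp flip: real_sqrt_mult) 
  have sq2: "sqrt 2 \<le> 3/2" by (rule real_le_lsqrt) (auto simp: power2_eq_square)
  have st: "s * t \<le> 3/2 * real n"
  proof -
    have "s * t \<le> s * (sqrt 2 * s)" using t2 s0 by (rule mult_left_mono)
    also have "\<dots> = sqrt 2 * real n" using ss by (simp add: algebra_simps)
    also have "\<dots> \<le> 3/2 * real n" using sq2 by (intro mult_right_mono) auto
    finally show ?thesis .
  qed
  have sn: "4 * s \<le> real n" using s4 s0 ss by (metis mult_right_mono)
  have R2: "2 * R = (t + 1) * real n / 4" unfolding R_def t_def by simp
  have cg: "sqrt (real n) / 3 * chgap n ?E a hx \<le> s / 3 * ((t + 1) * real n / 4)"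
    unfolding s_def using ch R2 by (intro mult_left_mono) auto
  have "s / 3 * ((t + 1) * real n / 4) = (s * t + s) * real n / 12" by (simp add: algebra_simps)
  also have "\<dots> \<le> (7/4 * real n) * real n / 12"
    using st sn by (intro divide_right_mono mult_right_mono) auto
  also have "\<dots> \<le> real (card ?E) / 2"
  proof -
    have "18 * real n \<le> real n * real n" using assms by (intro mult_right_mono) auto
    then show ?thesis using card_edges[of n] by linarith
  qed
  finally show ?thesis using cg mg unfolding hx_def a_def by linarith
qed

end
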